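(* The following two statements are equivalent: (1) For every prime $p>2$, the graph $\mathcal{G}_p^\times$ is connected and is equivalent to the graph $\mathcal{G}^\times$ with triples congruent modulo $p$ identified. (2) For every prime $p>2$, the canonical reduction map $\mathcal{M} \to \mathcal{M}_p$, $(a,b,c) \mapsto (a \bmod p, b \bmod p, c \bmod p)$, is onto.
   Context: $\mathcal{M}$ is the set of triples $(a,b,c)$ of nonnegative integers with $a^2+b^2+c^2 - abc = 0$, and $\mathcal{M}^\times = \mathcal{M}\setminus\{(0,0,0)\}$. For a prime $p > 2$, $\mathcal{M}_p$ is the set of $(x,y,z) \in (\mathbb{Z}/p\mathbb{Z})^3$ with $x^2+y^2+z^2-xyz \equiv 0 \pmod p$ and $\mathcal{M}_p^\times = \mathcal{M}_p \setminus\{(0,0,0)\}$. The Vieta involutions are $V_1(a,b,c) = (bc-a,b,c)$, $V_2(a,b,c) = (a,ac-b,c)$, $V_3(a,b,c) = (a,b,ab-c)$. The Markoff tree $\mathcal{G}^\times$ is the graph with vertex set $\mathcal{M}^\times$ (a connected tree rooted at $(3,3,3)$) with an edge labeled $V_i$ between $v_1,v_2$ whenever $V_i(v_1) = v_2$; the graph $\mathcal{G}_p^\times$ is defined in the same way with vertex set $\mathcal{M}_p^\times$ and the involutions taken modulo $p$. *)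

theory Defs
  imports "HOL-Computational_Algebra.Primes"
begin

type_synonym triple = "int \<times> int \<times> int"

definition markoff :: "triple set" where
  "markoff = {(a,b,c). a \<ge> 0 \<and> b \<ge> 0 \<and> c \<ge> 0 \<and> a^2 + b^2 + c^2 - a*b*c = 0}"

definition markoffX :: "triple set" where
  "markoffX = markoff - {(0,0,0)}"

text \<open>Elements of (Z/pZ)^3 are represented by integer triples with entries in {0..p-1}.\<close>
definition red :: "int \<Rightarrow> triple \<Rightarrow> triple" where
  "red p v = (case v of (a,b,c) \<Rightarrow> (a mod p, b mod p, c mod p))"

definition markoff_p :: "int \<Rightarrow> triple set" where
  "markoff_p p = {(x,y,z). x \<in> {0..<p} \<and> y \<in> {0..<p} \<and> z \<in> {0..<p} \<and>
                       (x^2 + y^2 + z^2 - x*y*z) mod p = 0}"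

definition markoff_pX :: "int \<Rightarrow> triple set" where
  "markoff_pX p = markoff_p p - {(0,0,0)}"

definition vieta :: "nat \<Rightarrow> triple \<Rightarrow> triple" where
  "vieta i v = (case v of (a,b,c) \<Rightarrow>
     if i = 1 then (b*c - a, b, c) else if i = 2 then (a, a*c - b, c) else (a, b, a*b - c))"

definition vieta_p :: "int \<Rightarrow> nat \<Rightarrow> triple \<Rightarrow> triple" where
  "vieta_p p i v = red p (vieta i v)"

definition edgesX :: "(triple \<times> nat \<times> triple) set" where
  "edgesX = {(v, i, vieta i v) | v i. v \<in> markoffX \<and> i \<in> {1,2,3}}"

definition edges_pX :: "int \<Rightarrow> (triple \<times> nat \<times> triple) set" where
  "edges_pX p = {(x, i, vieta_p p i x) | x i. x \<in> markoff_pX p \<and> i \<in> {1,2,3}}"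

definition connected_pX :: "int \<Rightarrow> bool" where
  "connected_pX p = (\<forall>x \<in> markoff_pX p. \<forall>y \<in> markoff_pX p.
      (x, y) \<in> {(u, w). \<exists>i. (u, i, w) \<in> edges_pX p}\<^sup>*)"

text \<open>G^x with triples congruent mod p identified: vertices are the residue classes
  (represented by the reductions) of the vertices, edges are the images of edges.
  Classes reducing to (0,0,0) are discarded (only relevant for p = 3).\<close>
definition quot_vertices :: "int \<Rightarrow> triple set" where
  "quot_vertices p = red p ` markoffX - {(0,0,0)}"

definition quot_edges :: "int \<Rightarrow> (triple \<times> nat \<times> triple) set" where
  "quot_edges p = {(red p v, i, red p w) | v i w. (v, i, w) \<in> edgesX \<and>
                    red p v \<noteq> (0,0,0) \<and> red p w \<noteq> (0,0,0)}"

end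

theory Submission
  imports Defs "HOL-Number_Theory.Cong"
begin

definition F :: "triple \<Rightarrow> int" where
  "F v = (case v of (a,b,c) \<Rightarrow> a^2 + b^2 + c^2 - a*b*c)"

lemma F_vieta: "F (vieta i v) = F v"
  by (cases v) (auto simp: F_def vieta_def power2_eq_square algebra_simps)

lemma vieta_vieta: "vieta i (vieta i v) = v"
  by (cases v) (auto simp: vieta_def)

lemma red_red_F: "p > 0 \<Longrightarrow> F (red p v) mod p = F v mod p"
proof -
  obtain a b c where v: "v = (a,b,c)" by (cases v)
  have ca: "[a mod p = a] (mod p)" "[b mod p = b] (mod p)" "[c mod p = c] (mod p)" by (simp_all add: cong_def)
  have "[a mod p * (a mod p) + b mod p * (b mod p) + c mod p * (c mod p) - a mod p * (b mod p) * (c mod p)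
        = a*a + b*b + c*c - a*b*c] (mod p)"
    by (intro cong_add cong_mult cong_diff ca)
  then have "(a mod p * (a mod p) + b mod p * (b mod p) + c mod p * (c mod p) - a mod p * (b mod p) * (c mod p)) mod p
        = (a*a + b*b + c*c - a*b*c) mod p" by (simp add: cong_def)
  then show ?thesis by (simp add: v F_def red_def power2_eq_square)
qed

lemma red_vieta: "red p (vieta i (red p v)) = red p (vieta i v)"
proof -
  obtain a b c where v: "v = (a,b,c)" by (cases v)
  have ca: "[a mod p = a] (mod p)" "[b mod p = b] (mod p)" "[c mod p = c] (mod p)" by (simp_all add: cong_def)
  have "[b mod p * (c mod p) - a mod p = b*c - a] (mod p)" by (intro cong_mult cong_diff ca)
  then have 1: "(b mod p * (c mod p) - a mod p) mod p = (b*c - a) mod p" by (simp add: cong_def)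
  have "[a mod p * (c mod p) - b mod p = a*c - b] (mod p)" by (intro cong_mult cong_diff ca)
  then have 2: "(a mod p * (c mod p) - b mod p) mod p = (a*c - b) mod p" by (simp add: cong_def)
  have "[a mod p * (b mod p) - c mod p = a*b - c] (mod p)" by (intro cong_mult cong_diff ca)
  then have 3: "(a mod p * (b mod p) - c mod p) mod p = (a*b - c) mod p" by (simp add: cong_def)
  show ?thesis using 1 2 3 by (simp add: v red_def vieta_def)
qed

lemma red_range: "p > 0 \<Longrightarrow> red p v = (x,y,z) \<Longrightarrow> x \<in> {0..<p} \<and> y \<in> {0..<p} \<and> z \<in> {0..<p}"
  by (cases v) (auto simp: red_def)

lemma markoff_p_iff: "v \<in> markoff_p p \<longleftrightarrow> red p v = v \<and> F v mod p = 0 \<and> p > 0"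
proof (cases v)
  case (fields a b c)
  show ?thesis
  proof
    assume "v \<in> markoff_p p"
    then show "red p v = v \<and> F v mod p = 0 \<and> p > 0" by (auto simp: fields markoff_p_def red_def F_def)
  next
    assume h: "red p v = v \<and> F v mod p = 0 \<and> p > 0"
    then have "a mod p = a" "b mod p = b" "c mod p = c" "p > 0" by (auto simp: fields red_def)
    then have "a \<in> {0..<p}" "b \<in> {0..<p}" "c \<in> {0..<p}"
      by (metis atLeastLessThan_iff pos_mod_bound pos_mod_sign)+
    then show "v \<in> markoff_p p" using h by (auto simp: fields markoff_p_def F_def)
  qed
qed

lemma red_idem: "red p (red p v) = red p v"
  by (cases v) (auto simp: red_def)

lemma red_markoff: "p > 0 \<Longrightarrow> v \<in> markoff \<Longrightarrow> red p v \<in> markoff_p p"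
  unfolding markoff_p_iff
  using red_red_F[of p v] by (cases v) (auto simp: markoff_def F_def red_idem)

lemma vieta_p_markoff_p: "x \<in> markoff_p p \<Longrightarrow> vieta_p p i x \<in> markoff_p p"
  unfolding markoff_p_iff vieta_p_def
  using red_red_F[of p "vieta i x"] F_vieta[of i x] by (auto simp: red_idem)

lemma vieta_p_invol: "x \<in> markoff_p p \<Longrightarrow> vieta_p p i (vieta_p p i x) = x"
  unfolding vieta_p_def markoff_p_iff
  by (metis red_vieta vieta_vieta)

lemma vieta_p_zero: "vieta_p p i (0,0,0) = (0,0,0)"
  by (simp add: vieta_p_def vieta_def red_def)

lemma red_zero: "red p (0,0,0) = (0,0,0)"
  by (simp add: red_def)

lemma vieta_p_X: "x \<in> markoff_pX p \<Longrightarrow> vieta_p p i x \<in> markoff_pX p"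
  unfolding markoff_pX_def
  using vieta_p_markoff_p vieta_p_invol vieta_p_zero by (metis Diff_iff singletonD singletonI)

lemma ge3:
  fixes a b c :: int
  assumes "a \<ge> 0" "b \<ge> 0" "c \<ge> 0" "a^2 + b^2 + c^2 - a*b*c = 0" "(a,b,c) \<noteq> (0,0,0)"
  shows "a \<ge> 3"
proof (rule ccontr)
  assume "\<not> a \<ge> 3"
  then have "a = 0 \<or> a = 1 \<or> a = 2" using assms(1) by auto
  moreover have "b^2 + c^2 - b*c \<ge> 0"
  proof -
    have "b^2 + c^2 - b*c = (b-c)^2 + b*c" by (simp add: power2_eq_square algebra_simps)
    then show ?thesis using assms(2,3) by (metis add_nonneg_nonneg mult_nonneg_nonneg zero_le_power2)
  qed
  moreover have "b^2 + c^2 - 2*b*c = (b-c)^2" by (simp add: power2_eq_square algebra_simps)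
  moreover have "b^2 \<ge> 0" "c^2 \<ge> 0" "(b-c)^2 \<ge> 0" by simp_all
  ultimately show False
  proof (elim disjE)
    assume "a = 0" then show False using assms by (auto simp: sum_power2_eq_zero_iff)
  next
    assume "a = 1" then show False using assms(4) \<open>b^2 + c^2 - b*c \<ge> 0\<close> by simp
  next
    assume "a = 2" then show False using assms(4) \<open>b^2 + c^2 - 2*b*c = (b-c)^2\<close> \<open>(b-c)^2 \<ge> 0\<close> by simp
  qed
qed

lemma key:
  fixes a b c :: int
  assumes "3 \<le> a" "a \<le> b" "b \<le> c" "a^2 + b^2 + c^2 = a*b*c" "(a,b,c) \<noteq> (3,3,3)"
  shows "0 < a*b - c \<and> a*b - c < c"
proof -
  define d where "d = a*b - c"
  have cd: "c*d = a^2 + b^2" using assms(4) by (simp add: d_def power2_eq_square algebra_simps)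
  have "c > 0" using assms by simp
  have dpos: "d > 0"
  proof (rule ccontr)
    assume "\<not> d > 0"
    then have "c*d \<le> 0" using \<open>c > 0\<close> by (simp add: mult_nonneg_nonpos)
    moreover have "a^2 + b^2 > 0" using assms by (simp add: add_pos_nonneg)
    ultimately show False using cd by simp
  qed
  have prod: "(c-b)*(d-b) = 2*b^2 + a^2 - a*b^2"
    using cd by (simp add: d_def power2_eq_square algebra_simps)
  have fb: "2*b^2 + a^2 - a*b^2 \<le> 0"
  proof -
    have "a*b^2 \<ge> 3*b^2" using assms(1) by (simp add: mult_right_mono)
    moreover have "a^2 \<le> b^2" using assms by (simp add: power_mono)
    ultimately show ?thesis by simp
  qed
  have "d < c"
  proof (cases "c = b")
    case False
    then have "c - b > 0" using assms by simp
    then have "d - b \<le> 0" using prod fb by (smt (verit) mult_pos_pos)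
    then show ?thesis using False assms by simp
  next
    case True
    then have e: "a^2 = b^2*(a-2)" using assms(4) by (simp add: power2_eq_square algebra_simps)
    have "a \<le> 3"
    proof (rule ccontr)
      assume "\<not> a \<le> 3"
      then have "a - 2 > 1" by simp
      then have "b^2*(a-2) > b^2" using assms by simp
      moreover have "b^2 \<ge> a^2" using assms by (simp add: power_mono)
      ultimately show False using e by simp
    qed
    then have "a = 3" using assms by simp
    then have "b^2 = 3^2" using e by simp
    then have "b = 3" using assms by (smt (verit) power2_eq_square mult_strict_mono)
    then show ?thesis using True \<open>a = 3\<close> assms by simp
  qed
  then show ?thesis using dpos d_def by simp
qed

lemma key2:
  fixes a b c :: int
  assumes "3 \<le> a" "3 \<le> b" "a \<le> c" "b \<le> c" "a^2 + b^2 + c^2 = a*b*c" "(a,b,c) \<noteq> (3,3,3)"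
  shows "0 < a*b - c \<and> a*b - c < c"
proof (cases "a \<le> b")
  case True then show ?thesis using key assms by blast
next
  case False
  have "0 < b*a - c \<and> b*a - c < c"
    by (rule key) (use assms False in \<open>auto simp: algebra_simps\<close>)
  then show ?thesis by (simp add: mult.commute)
qed

definition RZ :: "(triple \<times> triple) set" where
  "RZ = {(u, w). \<exists>i. (u, i, w) \<in> edgesX}"

lemma mX: "(a,b,c) \<in> markoffX \<longleftrightarrow> a \<ge> 0 \<and> b \<ge> 0 \<and> c \<ge> 0 \<and> a^2 + b^2 + c^2 = a*b*c \<and> (a,b,c) \<noteq> (0,0,0)"
  by (auto simp: markoffX_def markoff_def)

lemma all_ge3: "(a,b,c) \<in> markoffX \<Longrightarrow> a \<ge> 3 \<and> b \<ge> 3 \<and> c \<ge> 3"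
proof -
  assume h: "(a,b,c) \<in> markoffX"
  then have h': "a \<ge> 0" "b \<ge> 0" "c \<ge> 0" "a^2 + b^2 + c^2 = a*b*c" "(a,b,c) \<noteq> (0,0,0)" by (auto simp: mX)
  have "a \<ge> 3" by (rule ge3[of a b c]) (use h' in auto)
  moreover have "b \<ge> 3" by (rule ge3[of b a c]) (use h' in \<open>auto simp: algebra_simps\<close>)
  moreover have "c \<ge> 3" by (rule ge3[of c a b]) (use h' in \<open>auto simp: algebra_simps\<close>)
  ultimately show ?thesis by simp
qed

definition ssum :: "triple \<Rightarrow> int" where "ssum v = (case v of (x,y,z) \<Rightarrow> x+y+z)"

lemma descent_step: "u \<in> markoffX \<Longrightarrow> u \<noteq> (3,3,3) \<Longrightarrow>
   \<exists>w. (u, w) \<in> RZ \<and> w \<in> markoffX \<and> ssum w < ssum u"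
proof -
  assume u: "u \<in> markoffX" "u \<noteq> (3,3,3)"
  obtain a b c where abc: "u = (a,b,c)" by (cases u)
  have g: "a \<ge> 3" "b \<ge> 3" "c \<ge> 3" using all_ge3 u abc by auto
  have eq: "a^2 + b^2 + c^2 = a*b*c" using u abc by (simp add: mX)
  have ne: "(a,b,c) \<noteq> (3,3,3)" using u abc by simp
  consider "a \<le> c \<and> b \<le> c" | "b \<le> a \<and> c \<le> a" | "a \<le> b \<and> c \<le> b" by linarith
  then show ?thesis
  proof cases
    case 1
    have k: "0 < a*b - c \<and> a*b - c < c" by (rule key2) (use g eq ne 1 in auto)
    define w where "w = vieta 3 u"
    have w: "w = (a,b,a*b-c)" by (simp add: w_def abc vieta_def)
    have e2: "a^2 + b^2 + (a*b-c)^2 = a*b*(a*b-c)" (is "?lhs = ?rhs")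
    proof -
      have "?lhs - ?rhs = a^2 + b^2 + c^2 - a*b*c" by (simp add: power2_eq_square algebra_simps)
      then show ?thesis using eq by linarith
    qed
    have "(u,3,w) \<in> edgesX" unfolding edgesX_def w_def using u(1) by blast
    moreover have "w \<in> markoffX" unfolding w mX using e2 k g by auto
    ultimately have "(u, w) \<in> RZ \<and> w \<in> markoffX \<and> ssum w < ssum u"
      using k unfolding RZ_def by (auto simp: w abc ssum_def)
    then show ?thesis by blast
  next
    case 2
    have k: "0 < b*c - a \<and> b*c - a < a" by (rule key2) (use g eq ne 2 in \<open>auto simp: algebra_simps\<close>)
    define w where "w = vieta 1 u"
    have w: "w = (b*c-a,b,c)" by (simp add: w_def abc vieta_def)
    have e2: "(b*c-a)^2 + b^2 + c^2 = (b*c-a)*b*c" (is "?lhs = ?rhs")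
    proof -
      have "?lhs - ?rhs = a^2 + b^2 + c^2 - a*b*c" by (simp add: power2_eq_square algebra_simps)
      then show ?thesis using eq by linarith
    qed
    have "(u,1,w) \<in> edgesX" unfolding edgesX_def w_def using u(1) by blast
    moreover have "w \<in> markoffX" unfolding w mX using e2 k g by auto
    ultimately have "(u, w) \<in> RZ \<and> w \<in> markoffX \<and> ssum w < ssum u"
      using k unfolding RZ_def by (auto simp: w abc ssum_def)
    then show ?thesis by blast
  next
    case 3
    have k: "0 < a*c - b \<and> a*c - b < b" by (rule key2) (use g eq ne 3 in \<open>auto simp: algebra_simps\<close>)
    define w where "w = vieta 2 u"
    have w: "w = (a,a*c-b,c)" by (simp add: w_def abc vieta_def)
    have e2: "a^2 + (a*c-b)^2 + c^2 = a*(a*c-b)*c" (is "?lhs = ?rhs")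
    proof -
      have "?lhs - ?rhs = a^2 + b^2 + c^2 - a*b*c" by (simp add: power2_eq_square algebra_simps)
      then show ?thesis using eq by linarith
    qed
    have "(u,2,w) \<in> edgesX" unfolding edgesX_def w_def using u(1) by blast
    moreover have "w \<in> markoffX" unfolding w mX using e2 k g by auto
    ultimately have "(u, w) \<in> RZ \<and> w \<in> markoffX \<and> ssum w < ssum u"
      using k unfolding RZ_def by (auto simp: w abc ssum_def)
    then show ?thesis by blast
  qed
qed

lemma descent: "u \<in> markoffX \<Longrightarrow> (u, (3,3,3)) \<in> RZ\<^sup>*"
proof (induction "nat (ssum u)" arbitrary: u rule: less_induct)
  case less
  show ?case
  proof (cases "u = (3,3,3)")
    case True then show ?thesis by simp
  next
    case False
    then obtain w where w: "(u, w) \<in> RZ" "w \<in> markoffX"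
      "ssum w < ssum u"
      using descent_step[OF less.prems False] by blast
    have "ssum w \<ge> 0" using w(2) by (cases w) (simp add: mX ssum_def)
    then have lt: "nat (ssum w) < nat (ssum u)"
      using w(3) by linarith
    have "(w, (3,3,3)) \<in> RZ\<^sup>*" by (rule less.hyps[OF lt w(2)])
    then show ?thesis using w(1) by (rule converse_rtrancl_into_rtrancl[rotated])
  qed
qed


definition Rp :: "int \<Rightarrow> (triple \<times> triple) set" where
  "Rp p = {(u, w). \<exists>i. (u, i, w) \<in> edges_pX p}"

lemma transfer:
  assumes "p > 0" "(u, t) \<in> RZ\<^sup>*" "red p t \<noteq> (0,0,0)"
  shows "red p u \<noteq> (0,0,0) \<and> (red p u, red p t) \<in> (Rp p)\<^sup>*"
  using assms(2,3)
proof (induction rule: converse_rtrancl_induct)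
  case base
  then show ?case by simp
next
  case (step u u')
  from step.hyps(1) obtain i where i: "u \<in> markoffX" "i \<in> {1,2,3}" "u' = vieta i u"
    unfolding RZ_def edgesX_def by blast
  have ru': "red p u' = vieta_p p i (red p u)" by (simp add: vieta_p_def red_vieta i(3))
  have IH: "red p u' \<noteq> (0,0,0)" "(red p u', red p t) \<in> (Rp p)\<^sup>*" using step by auto
  have nz: "red p u \<noteq> (0,0,0)" using IH(1) ru' vieta_p_zero by metis
  have "red p u \<in> markoff_p p" using red_markoff[OF assms(1)] i(1) by (simp add: markoffX_def)
  then have "red p u \<in> markoff_pX p" using nz by (simp add: markoff_pX_def)
  then have "(red p u, red p u') \<in> Rp p" unfolding Rp_def edges_pX_def ru' using i(2) by blast
  then show ?case using nz IH(2) by (meson converse_rtrancl_into_rtrancl)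
qed

lemma Rp_sym: "sym (Rp p)"
proof (rule symI)
  fix x y assume "(x, y) \<in> Rp p"
  then obtain i where i: "x \<in> markoff_pX p" "i \<in> {1,2,3}" "y = vieta_p p i x"
    unfolding Rp_def edges_pX_def by blast
  have "y \<in> markoff_pX p" using vieta_p_X i by simp
  have xm: "x \<in> markoff_p p" using i(1) unfolding markoff_pX_def by blast
  have yx: "vieta_p p i y = x" unfolding i(3) by (rule vieta_p_invol[OF xm])
  have "(y, i, vieta_p p i y) \<in> edges_pX p" unfolding edges_pX_def using \<open>y \<in> markoff_pX p\<close> i(2) by blast
  then show "(y, x) \<in> Rp p" unfolding Rp_def yx by blast
qed

lemma markoff_p3: "markoff_p 3 = {(0,0,0)}"
proof -
  have r: "{0..<3::int} = {0,1,2}" by auto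
  show ?thesis unfolding markoff_p_def r by auto
qed

lemma red_in_range: "p > 0 \<Longrightarrow> red p (red p v) = red p v" by (rule red_idem)

theorem lemma2:
  shows "(\<forall>p::int. prime p \<and> p > 2 \<longrightarrow>
            connected_pX p \<and> quot_vertices p = markoff_pX p \<and> quot_edges p = edges_pX p)
     \<longleftrightarrow> (\<forall>p::int. prime p \<and> p > 2 \<longrightarrow> red p ` markoff = markoff_p p)"
proof
  assume H: "\<forall>p::int. prime p \<and> p > 2 \<longrightarrow>
            connected_pX p \<and> quot_vertices p = markoff_pX p \<and> quot_edges p = edges_pX p"
  show "\<forall>p::int. prime p \<and> p > 2 \<longrightarrow> red p ` markoff = markoff_p p"
  proof (intro allI impI)
    fix p :: int assume p: "prime p \<and> p > 2"
    then have qv: "quot_vertices p = markoff_pX p" using H by blast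
    have p0: "p > 0" using p by simp
    show "red p ` markoff = markoff_p p"
    proof
      show "red p ` markoff \<subseteq> markoff_p p" using red_markoff[OF p0] by blast
    next
      show "markoff_p p \<subseteq> red p ` markoff"
      proof
        fix x assume x: "x \<in> markoff_p p"
        show "x \<in> red p ` markoff"
        proof (cases "x = (0,0,0)")
          case True
          have "(0,0,0) \<in> markoff" by (simp add: markoff_def)
          then show ?thesis using True red_zero by (metis image_eqI)
        next
          case False
          then have "x \<in> quot_vertices p" using qv x by (simp add: markoff_pX_def)
          then show ?thesis unfolding quot_vertices_def markoffX_def by blast
        qed
      qed
    qed
  qed
next
  assume H: "\<forall>p::int. prime p \<and> p > 2 \<longrightarrow> red p ` markoff = markoff_p p"
  show "\<forall>p::int. prime p \<and> p > 2 \<longrightarrow>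
            connected_pX p \<and> quot_vertices p = markoff_pX p \<and> quot_edges p = edges_pX p"
  proof (intro allI impI)
    fix p :: int assume p: "prime p \<and> p > 2"
    have p0: "p > 0" using p by simp
    have surj: "red p ` markoff = markoff_p p" using H p by blast
    have lift: "\<exists>v \<in> markoffX. red p v = x" if x: "x \<in> markoff_pX p" for x
    proof -
      from x have "x \<in> red p ` markoff" "x \<noteq> (0,0,0)" using surj by (auto simp: markoff_pX_def)
      then obtain v where v: "v \<in> markoff" "red p v = x" by blast
      then have "v \<noteq> (0,0,0)" using \<open>x \<noteq> (0,0,0)\<close> red_zero by metis
      then show ?thesis using v by (auto simp: markoffX_def)
    qed
    have QV: "quot_vertices p = markoff_pX p"
    proof
      show "quot_vertices p \<subseteq> markoff_pX p"
        unfolding quot_vertices_def markoff_pX_def markoffX_def using red_markoff[OF p0] by blast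
    next
      show "markoff_pX p \<subseteq> quot_vertices p"
        unfolding quot_vertices_def using lift by (force simp: markoff_pX_def)
    qed
    have QE: "quot_edges p = edges_pX p"
    proof
      show "quot_edges p \<subseteq> edges_pX p"
      proof
        fix e assume "e \<in> quot_edges p"
        then obtain v i w where e: "e = (red p v, i, red p w)" "(v, i, w) \<in> edgesX"
          "red p v \<noteq> (0,0,0)" unfolding quot_edges_def by blast
        then have vi: "v \<in> markoffX" "i \<in> {1,2,3}" "w = vieta i v" unfolding edgesX_def by auto
        have "red p v \<in> markoff_pX p" using vi(1) e(3) red_markoff[OF p0]
          by (simp add: markoff_pX_def markoffX_def)
        moreover have "red p w = vieta_p p i (red p v)" by (simp add: vieta_p_def red_vieta vi(3))
        ultimately show "e \<in> edges_pX p" unfolding edges_pX_def e(1) using vi(2) by blast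
      qed
    next
      show "edges_pX p \<subseteq> quot_edges p"
      proof
        fix e assume "e \<in> edges_pX p"
        then obtain x i where e: "e = (x, i, vieta_p p i x)" "x \<in> markoff_pX p" "i \<in> {1,2,3}"
          unfolding edges_pX_def by blast
        obtain v where v: "v \<in> markoffX" "red p v = x" using lift e(2) by blast
        have ed: "(v, i, vieta i v) \<in> edgesX" unfolding edgesX_def using v(1) e(3) by blast
        have rw: "red p (vieta i v) = vieta_p p i x" by (simp add: vieta_p_def red_vieta v(2)[symmetric])
        have "vieta_p p i x \<in> markoff_pX p" using vieta_p_X e(2) by simp
        then have nz: "vieta_p p i x \<noteq> (0,0,0)" "x \<noteq> (0,0,0)" using e(2) by (auto simp: markoff_pX_def)
        show "e \<in> quot_edges p" unfolding quot_edges_def e(1) mem_Collect_eq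
          by (intro exI[of _ v] exI[of _ i] exI[of _ "vieta i v"] conjI) (use ed rw v(2) nz in simp_all)
      qed
    qed
    have CO: "connected_pX p"
    proof (cases "p = 3")
      case True
      then have "markoff_pX p = {}" using markoff_p3 by (simp add: markoff_pX_def)
      then show ?thesis by (simp add: connected_pX_def)
    next
      case False
      then have p4: "p \<ge> 4" using p by simp
      have t: "red p (3,3,3) \<noteq> (0,0,0)" using p4 by (simp add: red_def)
      have RR: "{(u, w). \<exists>i. (u, i, w) \<in> edges_pX p} = Rp p" by (simp add: Rp_def)
      show ?thesis unfolding connected_pX_def RR
      proof (intro ballI)
        fix x y assume x: "x \<in> markoff_pX p" and y: "y \<in> markoff_pX p"
        obtain u where u: "u \<in> markoffX" "red p u = x" using lift x by blast
        obtain w where w: "w \<in> markoffX" "red p w = y" using lift y by blast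
        have 1: "(x, red p (3,3,3)) \<in> (Rp p)\<^sup>*" using transfer[OF p0 descent[OF u(1)] t] u(2) by simp
        have "(y, red p (3,3,3)) \<in> (Rp p)\<^sup>*" using transfer[OF p0 descent[OF w(1)] t] w(2) by simp
        then have 2: "(red p (3,3,3), y) \<in> (Rp p)\<^sup>*"
          using sym_rtrancl[OF Rp_sym] by (meson symD)
        show "(x, y) \<in> (Rp p)\<^sup>*" using 1 2 by (rule rtrancl_trans)
      qed
    qed
    show "connected_pX p \<and> quot_vertices p = markoff_pX p \<and> quot_edges p = edges_pX p"
      using CO QV QE by blast
  qed
qed

end
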